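(* Let $D$ be an integral domain with quotient field $K$, let $L$ be a field extension of $K$, and let $R=D+XL[X]$ and $R'=D+XL[[X]]$, where $X$ is an indeterminate. (1) If $D$ is a field, then $R$ and $R'$ are completely atomic domains. (2) If $D$ is not a field and $D$ is atomic, then $R$ and $R'$ are completely atomic domains.
   Context: An atom (irreducible element) of an integral domain is a nonzero nonunit $a$ such that $a=bc$ implies $b$ or $c$ is a unit. A nonzero nonunit is atomic if it is a finite product of atoms; a domain is atomic if every nonzero nonunit is atomic. A domain is completely atomic if every nonunit divisor of an atomic element is atomic. *)

theory Defs
  imports "HOL-Computational_Algebra.Polynomial" "HOL-Computational_Algebra.Formal_Power_Series"
begin

definition is_subring :: "'a::comm_ring_1 set \<Rightarrow> bool" where
  "is_subring S \<longleftrightarrow> 0 \<in> S \<and> 1 \<in> S \<and>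
     (\<forall>x\<in>S. \<forall>y\<in>S. x + y \<in> S \<and> x - y \<in> S \<and> x * y \<in> S)"

definition unit_in :: "'a::comm_ring_1 set \<Rightarrow> 'a \<Rightarrow> bool" where
  "unit_in S u \<longleftrightarrow> u \<in> S \<and> (\<exists>v\<in>S. u * v = 1)"

definition dvd_in :: "'a::comm_ring_1 set \<Rightarrow> 'a \<Rightarrow> 'a \<Rightarrow> bool" where
  "dvd_in S b a \<longleftrightarrow> b \<in> S \<and> a \<in> S \<and> (\<exists>c\<in>S. a = b * c)"

definition atom_in :: "'a::comm_ring_1 set \<Rightarrow> 'a \<Rightarrow> bool" where
  "atom_in S a \<longleftrightarrow> a \<in> S \<and> a \<noteq> 0 \<and> \<not> unit_in S a \<and>
     (\<forall>b\<in>S. \<forall>c\<in>S. a = b * c \<longrightarrow> unit_in S b \<or> unit_in S c)"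

definition atomic_elem_in :: "'a::comm_ring_1 set \<Rightarrow> 'a \<Rightarrow> bool" where
  "atomic_elem_in S a \<longleftrightarrow> a \<in> S \<and> a \<noteq> 0 \<and> \<not> unit_in S a \<and>
     (\<exists>xs. xs \<noteq> [] \<and> (\<forall>x\<in>set xs. atom_in S x) \<and> a = prod_list xs)"

definition atomic_domain :: "'a::comm_ring_1 set \<Rightarrow> bool" where
  "atomic_domain S \<longleftrightarrow> (\<forall>a\<in>S. a \<noteq> 0 \<and> \<not> unit_in S a \<longrightarrow> atomic_elem_in S a)"

definition completely_atomic :: "'a::comm_ring_1 set \<Rightarrow> bool" where
  "completely_atomic S \<longleftrightarrow>
     (\<forall>a b. atomic_elem_in S a \<and> dvd_in S b a \<and> \<not> unit_in S b \<longrightarrow> atomic_elem_in S b)"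

text \<open>Inside an ambient idom, a subring is an integral domain.\<close>
definition completely_atomic_domain :: "'a::idom set \<Rightarrow> bool" where
  "completely_atomic_domain S \<longleftrightarrow> is_subring S \<and> completely_atomic S"

definition field_in :: "'a::comm_ring_1 set \<Rightarrow> bool" where
  "field_in S \<longleftrightarrow> 1 \<noteq> (0::'a) \<and> (\<forall>a\<in>S. a \<noteq> 0 \<longrightarrow> unit_in S a)"

end

theory Submission
  imports Defs
begin

lemma atomic_by_measure:
  fixes S :: "'a::comm_ring_1 set" and nu :: "'a \<Rightarrow> nat"
  assumes step: "\<And>x. x \<in> S \<Longrightarrow> P x \<Longrightarrow> x \<noteq> 0 \<Longrightarrow> \<not> unit_in S x \<Longrightarrow> \<not> atom_in S x \<Longrightarrow>
     \<exists>g h. x = g*h \<and> g\<in>S \<and> h\<in>S \<and> P g \<and> P h \<and> g \<noteq> 0 \<and> h \<noteq> 0 \<and>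
       \<not> unit_in S g \<and> \<not> unit_in S h \<and> nu g < nu x \<and> nu h < nu x"
  shows "x \<in> S \<Longrightarrow> P x \<Longrightarrow> x \<noteq> 0 \<Longrightarrow> \<not> unit_in S x \<Longrightarrow> atomic_elem_in S x"
proof (induction "nu x" arbitrary: x rule: less_induct)
  case less
  show ?case
  proof (cases "atom_in S x")
    case True
    then show ?thesis using less.prems unfolding atomic_elem_in_def
      by (intro conjI exI[of _ "[x]"]) auto
  next
    case False
    then obtain g h where gh: "x = g*h" "g\<in>S" "h\<in>S" "P g" "P h" "g \<noteq> 0" "h \<noteq> 0"
       "\<not> unit_in S g" "\<not> unit_in S h" "nu g < nu x" "nu h < nu x"
      using step less.prems by blast
    have "atomic_elem_in S g" "atomic_elem_in S h" using less.hyps gh by auto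
    then obtain xs ys where "xs \<noteq> []" "\<forall>y\<in>set xs. atom_in S y" "g = prod_list xs"
      "ys \<noteq> []" "\<forall>y\<in>set ys. atom_in S y" "h = prod_list ys"
      unfolding atomic_elem_in_def by blast
    then show ?thesis using less.prems gh unfolding atomic_elem_in_def
      by (intro conjI exI[of _ "xs @ ys"]) auto
  qed
qed

lemma cancel_l:
  fixes u v a :: "'a::comm_ring_1"
  assumes "u*v = 1" shows "v*(u*a) = a"
proof -
  have "v*(u*a) = (u*v)*a" by (simp only: ac_simps)
  then show ?thesis using assms by simp
qed

lemma unit_atom:
  fixes S :: "'a::comm_ring_1 set"
  assumes sr: "is_subring S" and a: "atom_in S a" and u: "unit_in S u"
  shows "atom_in S (u*a)"
proof -
  obtain v where v: "v \<in> S" "u*v = 1" using u unfolding unit_in_def by auto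
  have uS: "u \<in> S" using u unfolding unit_in_def by auto
  have aS: "a \<in> S" "a \<noteq> 0" "\<not> unit_in S a" using a unfolding atom_in_def by auto
  have mem: "u*a \<in> S" using sr uS aS unfolding is_subring_def by auto
  have nz: "u*a \<noteq> 0"
  proof
    assume "u*a = 0"
    then have "v*(u*a) = 0" by simp
    then show False using aS cancel_l[OF v(2), of a] by simp
  qed
  have nu: "\<not> unit_in S (u*a)"
  proof
    assume "unit_in S (u*a)"
    then obtain w where w: "w \<in> S" "u*a*w = 1" unfolding unit_in_def by auto
    have "a*(u*w) = 1" using w by (simp add: ac_simps)
    moreover have "u*w \<in> S" using sr uS w unfolding is_subring_def by auto
    ultimately show False using aS unfolding unit_in_def by auto
  qed
  have fac: "unit_in S b \<or> unit_in S c" if bc: "b \<in> S" "c \<in> S" "u*a = b*c" for b c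
  proof -
    have "a = v*(u*a)" using cancel_l[OF v(2), of a] by simp
    also have "\<dots> = v*(b*c)" using bc(3) by simp
    also have "\<dots> = (v*b)*c" by (simp only: mult.assoc)
    finally have "a = (v*b)*c" .
    moreover have "v*b \<in> S" using sr v bc unfolding is_subring_def by auto
    ultimately have "unit_in S (v*b) \<or> unit_in S c" using a bc unfolding atom_in_def by blast
    then show ?thesis
    proof
      assume "unit_in S (v*b)"
      then obtain w where w: "w \<in> S" "v*b*w = 1" unfolding unit_in_def by auto
      have "b*(v*w) = 1" using w by (simp add: ac_simps)
      moreover have "v*w \<in> S" using sr v w unfolding is_subring_def by auto
      ultimately show ?thesis using bc unfolding unit_in_def by auto
    qed simp
  qed
  show ?thesis unfolding atom_in_def using mem nz nu fac by blast
qed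

lemma atomic_unit:
  fixes S :: "'a::comm_ring_1 set"
  assumes sr: "is_subring S" and a: "atomic_elem_in S a" and u: "unit_in S u"
  shows "atomic_elem_in S (u*a)"
proof -
  obtain xs where xs: "xs \<noteq> []" "\<forall>x\<in>set xs. atom_in S x" "a = prod_list xs"
    using a unfolding atomic_elem_in_def by blast
  obtain y ys where yys: "xs = y # ys" using xs(1) by (cases xs) auto
  obtain v where v: "v \<in> S" "u*v = 1" using u unfolding unit_in_def by auto
  have uS: "u \<in> S" using u unfolding unit_in_def by auto
  have aS: "a \<in> S" "a \<noteq> 0" "\<not> unit_in S a" using a unfolding atomic_elem_in_def by auto
  have mem: "u*a \<in> S" using sr uS aS unfolding is_subring_def by auto
  have nz: "u*a \<noteq> 0"
  proof
    assume "u*a = 0"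
    then have "v*(u*a) = 0" by simp
    then show False using aS cancel_l[OF v(2), of a] by simp
  qed
  have nu: "\<not> unit_in S (u*a)"
  proof
    assume "unit_in S (u*a)"
    then obtain w where w: "w \<in> S" "u*a*w = 1" unfolding unit_in_def by auto
    have "a*(u*w) = 1" using w by (simp add: ac_simps)
    moreover have "u*w \<in> S" using sr uS w unfolding is_subring_def by auto
    ultimately show False using aS unfolding unit_in_def by auto
  qed
  have "atom_in S (u*y)" using unit_atom[OF sr _ u] xs yys by auto
  moreover have "u*a = prod_list ((u*y) # ys)" using xs yys by (simp add: ac_simps)
  ultimately show ?thesis unfolding atomic_elem_in_def using mem nz nu xs yys
    by (intro conjI exI[of _ "(u*y) # ys"]) auto
qed

lemma atomic_mult:
  fixes S :: "'a::idom set"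
  assumes sr: "is_subring S" and a: "atomic_elem_in S a" and b: "atomic_elem_in S b"
  shows "atomic_elem_in S (a*b)"
proof -
  obtain xs where xs: "xs \<noteq> []" "\<forall>x\<in>set xs. atom_in S x" "a = prod_list xs"
    using a unfolding atomic_elem_in_def by blast
  obtain ys where ys: "ys \<noteq> []" "\<forall>x\<in>set ys. atom_in S x" "b = prod_list ys"
    using b unfolding atomic_elem_in_def by blast
  have aS: "a \<in> S" "a \<noteq> 0" "\<not> unit_in S a" using a unfolding atomic_elem_in_def by auto
  have bS: "b \<in> S" "b \<noteq> 0" using b unfolding atomic_elem_in_def by auto
  have nu: "\<not> unit_in S (a*b)"
  proof
    assume "unit_in S (a*b)"
    then obtain w where w: "w \<in> S" "a*b*w = 1" unfolding unit_in_def by auto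
    have "a*(b*w) = 1" using w by (simp add: ac_simps)
    moreover have "b*w \<in> S" using sr bS w unfolding is_subring_def by auto
    ultimately show False using aS unfolding unit_in_def by auto
  qed
  show ?thesis unfolding atomic_elem_in_def using aS bS sr nu xs ys
    unfolding is_subring_def
    by (intro conjI exI[of _ "xs @ ys"]) auto
qed

lemma field_case_ca:
  fixes S :: "'a::idom set"
  assumes "atomic_domain S"
  shows "completely_atomic S"
  unfolding completely_atomic_def
proof (intro allI impI)
  fix a b assume h: "atomic_elem_in S a \<and> dvd_in S b a \<and> \<not> unit_in S b"
  then have "b \<in> S" "b \<noteq> 0" unfolding dvd_in_def atomic_elem_in_def by auto
  then show "atomic_elem_in S b" using assms h unfolding atomic_domain_def by auto
qed

locale cterm =
  fixes D :: "'l::field set" and S :: "'a::idom set" and ev :: "'a \<Rightarrow> 'l" and cst :: "'l \<Rightarrow> 'a"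
  assumes S_eq: "S = {x. ev x \<in> D}"
  and ev_mult: "\<And>x y. ev (x*y) = ev x * ev y"
  and ev_add: "\<And>x y. ev (x+y) = ev x + ev y"
  and ev_diff: "\<And>x y. ev (x-y) = ev x - ev y"
  and ev_1: "ev 1 = 1" and ev_0: "ev 0 = 0"
  and ev_cst: "\<And>d. ev (cst d) = d"
  and cst_mult: "\<And>a b. cst (a*b) = cst a * cst b"
  and cst_1: "cst 1 = 1"
  and D_sub: "is_subring D"
begin

lemma mem: "x \<in> S \<longleftrightarrow> ev x \<in> D" using S_eq by auto

lemma subring: "is_subring S"
  using D_sub unfolding is_subring_def by (auto simp: mem ev_mult ev_add ev_diff ev_1 ev_0)

lemma unit_ev: "unit_in S x \<Longrightarrow> unit_in D (ev x)"
proof -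
  assume "unit_in S x"
  then obtain v where v0: "x \<in> S" "v \<in> S" "x * v = 1" unfolding unit_in_def by auto
  then have v: "ev x \<in> D" "ev v \<in> D" "x * v = 1" by (auto simp: mem)
  have "ev x * ev v = 1" using v(3) ev_1 by (simp add: ev_mult[symmetric])
  then show ?thesis using v unfolding unit_in_def by auto
qed

lemma unitD_0: "\<not> unit_in D 0" unfolding unit_in_def by auto

lemma ev_prod: "ev (prod_list xs) = prod_list (map ev xs)"
  by (induction xs) (auto simp: ev_mult ev_1)

lemma cst_prod: "cst (prod_list xs) = prod_list (map cst xs)"
  by (induction xs) (auto simp: cst_mult cst_1)

lemma atom_ev:
  assumes d: "d \<in> D" "d \<noteq> 0" "\<not> unit_in D d" and x: "atom_in S x"
  shows "ev x \<noteq> 0"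
proof
  assume e: "ev x = 0"
  have inv: "cst d * cst (1/d) = 1" using d cst_mult[of d "1/d"] cst_1 by simp
  have "cst d * (cst (1/d) * x) = (cst d * cst (1/d)) * x" by (simp only: mult.assoc)
  then have "x = cst d * (cst (1/d) * x)" using inv by simp
  moreover have "cst d \<in> S" "cst (1/d) * x \<in> S" using d e D_sub
    by (auto simp: mem ev_cst ev_mult is_subring_def)
  ultimately have "unit_in S (cst d) \<or> unit_in S (cst (1/d) * x)"
    using x unfolding atom_in_def by blast
  then show False
  proof
    assume "unit_in S (cst d)"
    then have "unit_in D (ev (cst d))" by (rule unit_ev)
    then show False using d(3) by (simp only: ev_cst)
  next
    assume "unit_in S (cst (1/d) * x)"
    then have "unit_in D (ev (cst (1/d) * x))" by (rule unit_ev)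
    then have "unit_in D 0" using e by (simp only: ev_mult mult_zero_right)
    then show False using unitD_0 by simp
  qed
qed

lemma atomic_ev:
  assumes d: "d \<in> D" "d \<noteq> 0" "\<not> unit_in D d" and a: "atomic_elem_in S a"
  shows "ev a \<noteq> 0"
proof -
  obtain xs where xs: "\<forall>x\<in>set xs. atom_in S x" "a = prod_list xs"
    using a unfolding atomic_elem_in_def by blast
  have "\<forall>x\<in>set xs. ev x \<noteq> 0" using xs atom_ev[OF d] by auto
  then show ?thesis using xs by (auto simp: ev_prod prod_list_zero_iff)
qed

lemma lift_atomic:
  assumes A: "\<And>d. atom_in D d \<Longrightarrow> atom_in S (cst d)" and a: "atomic_elem_in D a"
  shows "atomic_elem_in S (cst a)"
proof -
  obtain xs where xs: "xs \<noteq> []" "\<forall>x\<in>set xs. atom_in D x" "a = prod_list xs"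
    using a unfolding atomic_elem_in_def by blast
  have aD: "a \<in> D" "a \<noteq> 0" "\<not> unit_in D a" using a unfolding atomic_elem_in_def by auto
  have "cst a \<in> S" using aD by (simp add: mem ev_cst)
  moreover have "cst a \<noteq> 0"
  proof
    assume "cst a = 0"
    then have "ev (cst a) = ev 0" by simp
    then show False using aD by (simp only: ev_cst ev_0)
  qed
  moreover have "\<not> unit_in S (cst a)"
  proof
    assume "unit_in S (cst a)"
    then have "unit_in D (ev (cst a))" by (rule unit_ev)
    then show False using aD by (simp only: ev_cst)
  qed
  moreover have "cst a = prod_list (map cst xs)" using xs cst_prod by simp
  ultimately show ?thesis unfolding atomic_elem_in_def using xs A
    by (intro conjI exI[of _ "map cst xs"]) auto
qed

lemma main_nf:
  assumes H: "\<And>x. x \<in> S \<Longrightarrow> unit_in D (ev x) \<Longrightarrow> \<not> unit_in S x \<Longrightarrow> atomic_elem_in S x"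
  and A: "\<And>d. atom_in D d \<Longrightarrow> atom_in S (cst d)"
  and AD: "atomic_domain D"
  and b: "b \<in> S" "ev b \<noteq> 0" "\<not> unit_in S b"
  shows "atomic_elem_in S b"
proof (cases "unit_in D (ev b)")
  case True then show ?thesis using H b by auto
next
  case False
  define a where "a = ev b"
  have aD: "a \<in> D" using b mem a_def by auto
  have ca: "atomic_elem_in S (cst a)"
    using lift_atomic[OF A] AD aD False b unfolding atomic_domain_def a_def by auto
  define h where "h = cst (1/a) * b"
  have hS: "h \<in> S" and h1: "ev h = 1" using b D_sub
    by (auto simp: h_def mem ev_mult ev_cst a_def is_subring_def)
  have inv: "cst a * cst (1/a) = 1" using b cst_mult[of a "1/a"] cst_1 a_def by simp
  have beq: "b = h * cst a" unfolding h_def using inv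
  proof -
    have "cst (1/a) * b * cst a = (cst a * cst (1/a)) * b" by (simp only: ac_simps)
    then show "b = cst (1/a) * b * cst a" using inv by simp
  qed
  show ?thesis
  proof (cases "unit_in S h")
    case True
    then show ?thesis using atomic_unit[OF subring ca] beq by simp
  next
    case False
    have "unit_in D (ev h)" using h1 D_sub unfolding unit_in_def is_subring_def by auto
    then have "atomic_elem_in S h" using H hS False by auto
    then show ?thesis using atomic_mult[OF subring _ ca] beq by simp
  qed
qed

lemma nonfield_ca:
  assumes NF: "\<not> field_in D"
  and H: "\<And>x. x \<in> S \<Longrightarrow> unit_in D (ev x) \<Longrightarrow> \<not> unit_in S x \<Longrightarrow> atomic_elem_in S x"
  and A: "\<And>d. atom_in D d \<Longrightarrow> atom_in S (cst d)"
  and AD: "atomic_domain D"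
  shows "completely_atomic S"
proof -
  obtain d where d: "d \<in> D" "d \<noteq> 0" "\<not> unit_in D d"
    using NF unfolding field_in_def by auto
  show ?thesis unfolding completely_atomic_def
  proof (intro allI impI)
    fix a b assume h: "atomic_elem_in S a \<and> dvd_in S b a \<and> \<not> unit_in S b"
    then obtain c where c: "b \<in> S" "a = b*c" unfolding dvd_in_def by auto
    have "ev a \<noteq> 0" using atomic_ev[OF d] h by auto
    then have "ev b \<noteq> 0" using c by (auto simp: ev_mult)
    then show "atomic_elem_in S b" using main_nf[OF H A AD] c h by auto
  qed
qed

end


definition PR :: "'l::field set \<Rightarrow> 'l poly set" where "PR D = {p. coeff p 0 \<in> D}"
definition FR :: "'l::field set \<Rightarrow> 'l fps set" where "FR D = {f. fps_nth f 0 \<in> D}"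

lemma poly_cterm: "is_subring D \<Longrightarrow> cterm D (PR D) (\<lambda>p. coeff p 0) (\<lambda>d. [:d:])"
proof (unfold_locales, goal_cases)
  case (1) show ?case by (simp add: PR_def)
next case (2 x y) show ?case by (rule coeff_mult_0)
next case (3 x y) show ?case by simp
next case (4 x y) show ?case by simp
next case 5 show ?case by simp
next case 6 show ?case by simp
next case (7 d) show ?case by simp
next case (8 a b) show ?case by simp
next case 9 show ?case by (simp add: one_pCons)
next case 10 then show ?case .
qed

lemma fps_cterm: "is_subring D \<Longrightarrow> cterm D (FR D) (\<lambda>f. fps_nth f 0) fps_const"
proof (unfold_locales, goal_cases)
  case (1) show ?case by (simp add: FR_def)
next case (2 x y) show ?case by simp
next case (3 x y) show ?case by simp
next case (4 x y) show ?case by simp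
next case 5 show ?case by simp
next case 6 show ?case by simp
next case (7 d) show ?case by simp
next case (8 a b) show ?case by simp
next case 9 show ?case by simp
next case 10 then show ?case .
qed

lemma poly_deg0_unit:
  assumes "is_subring D" "p \<in> PR D" "degree p = 0" "unit_in D (coeff p 0)"
  shows "unit_in (PR D) p"
proof -
  obtain c where c: "p = [:c:]" using assms(3) by (rule degree_eq_zeroE)
  obtain v where v: "v \<in> D" "c * v = 1" using assms(4) c unfolding unit_in_def by auto
  have "[:c:] * [:v:] = [:c*v:]" by simp
  then have "[:c:] * [:v:] = 1" using v by (simp add: one_pCons)
  then show ?thesis using assms(2) v c unfolding unit_in_def PR_def by (intro conjI bexI[of _ "[:v:]"]) auto
qed

lemma unit_prod_D:
  assumes "is_subring D" "b \<in> D" "c \<in> D" "unit_in D (b*c)"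
  shows "unit_in D b"
proof -
  obtain w where w: "w \<in> D" "b*c*w = 1" using assms(4) unfolding unit_in_def by auto
  have "b * (c*w) = 1" using w by (simp add: ac_simps)
  moreover have "c*w \<in> D" using assms w unfolding is_subring_def by auto
  ultimately show ?thesis using assms(2) unfolding unit_in_def by auto
qed

lemma poly_H:
  assumes D: "is_subring D"
  shows "x \<in> PR D \<Longrightarrow> unit_in D (coeff x 0) \<Longrightarrow> \<not> unit_in (PR D) x \<Longrightarrow> atomic_elem_in (PR D) x"
proof -
  assume a: "x \<in> PR D" "unit_in D (coeff x 0)" "\<not> unit_in (PR D) x"
  have nz: "x \<noteq> 0" using a(2) unfolding unit_in_def by auto
  show ?thesis
  proof (rule atomic_by_measure[where P = "\<lambda>x. unit_in D (coeff x 0)" and nu = degree])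
    fix x assume x: "x \<in> PR D" "unit_in D (coeff x 0)" "x \<noteq> 0" "\<not> unit_in (PR D) x" "\<not> atom_in (PR D) x"
    then obtain b c where bc: "b \<in> PR D" "c \<in> PR D" "x = b*c" "\<not> unit_in (PR D) b" "\<not> unit_in (PR D) c"
      unfolding atom_in_def by blast
    have bcnz: "b \<noteq> 0" "c \<noteq> 0" using bc x by auto
    have bD: "coeff b 0 \<in> D" "coeff c 0 \<in> D" using bc unfolding PR_def by auto
    have ub: "unit_in D (coeff b 0)" using unit_prod_D[OF D bD] x bc by (simp add: coeff_mult_0)
    have uc: "unit_in D (coeff c 0)" using unit_prod_D[OF D bD(2,1)] x bc by (simp add: coeff_mult_0 mult.commute[of "coeff c 0"])
    have "degree b \<noteq> 0" using poly_deg0_unit[OF D bc(1) _ ub] bc by auto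
    moreover have "degree c \<noteq> 0" using poly_deg0_unit[OF D bc(2) _ uc] bc by auto
    moreover have "degree x = degree b + degree c" using bc bcnz by (simp add: degree_mult_eq)
    ultimately show "\<exists>g h. x = g*h \<and> g\<in>PR D \<and> h\<in>PR D \<and> unit_in D (coeff g 0) \<and> unit_in D (coeff h 0) \<and> g \<noteq> 0 \<and> h \<noteq> 0 \<and>
       \<not> unit_in (PR D) g \<and> \<not> unit_in (PR D) h \<and> degree g < degree x \<and> degree h < degree x"
      using bc bcnz ub uc by (intro exI[of _ b] exI[of _ c]) auto
  qed (use a nz in auto)
qed

lemma poly_field_atomic:
  assumes D: "is_subring D" and F: "field_in D"
  shows "atomic_domain (PR D)"
proof -
  have pos: "degree b \<noteq> 0" if "b \<in> PR D" "b \<noteq> 0" "\<not> unit_in (PR D) b" for b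
  proof
    assume d0: "degree b = 0"
    then obtain c where c: "b = [:c:]" by (rule degree_eq_zeroE)
    have "unit_in D (coeff b 0)" using F that c unfolding field_in_def PR_def by auto
    then show False using poly_deg0_unit[OF D that(1) d0] that by auto
  qed
  show ?thesis unfolding atomic_domain_def
  proof (intro ballI impI)
    fix x assume x: "x \<in> PR D" "x \<noteq> 0 \<and> \<not> unit_in (PR D) x"
    show "atomic_elem_in (PR D) x"
    proof (rule atomic_by_measure[where P = "\<lambda>x. True" and nu = degree])
      fix x assume x: "x \<in> PR D" "x \<noteq> 0" "\<not> unit_in (PR D) x" "\<not> atom_in (PR D) x"
      then obtain b c where bc: "b \<in> PR D" "c \<in> PR D" "x = b*c" "\<not> unit_in (PR D) b" "\<not> unit_in (PR D) c"
        unfolding atom_in_def by blast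
      have bcnz: "b \<noteq> 0" "c \<noteq> 0" using bc x by auto
      have "degree b \<noteq> 0" "degree c \<noteq> 0" using pos bc bcnz by auto
      moreover have "degree x = degree b + degree c" using bc bcnz by (simp add: degree_mult_eq)
      ultimately show "\<exists>g h. x = g*h \<and> g\<in>PR D \<and> h\<in>PR D \<and> True \<and> True \<and> g \<noteq> 0 \<and> h \<noteq> 0 \<and>
         \<not> unit_in (PR D) g \<and> \<not> unit_in (PR D) h \<and> degree g < degree x \<and> degree h < degree x"
        using bc bcnz by (intro exI[of _ b] exI[of _ c]) auto
    qed (use x in auto)
  qed
qed

lemma poly_A:
  assumes D: "is_subring D" and d: "atom_in D d"
  shows "atom_in (PR D) [:d:]"
proof -
  interpret cterm D "PR D" "\<lambda>p. coeff p 0" "\<lambda>d. [:d:]" by (rule poly_cterm[OF D])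
  have dD: "d \<in> D" "d \<noteq> 0" "\<not> unit_in D d" using d unfolding atom_in_def by auto
  have nu: "\<not> unit_in (PR D) [:d:]" using unit_ev dD by fastforce
  have fac: "unit_in (PR D) b \<or> unit_in (PR D) c" if bc: "b \<in> PR D" "c \<in> PR D" "[:d:] = b*c" for b c
  proof -
    have nz: "b \<noteq> 0" "c \<noteq> 0" using bc dD by auto
    have "degree (b*c) = 0" using bc(3)[symmetric] by simp
    then have "degree b + degree c = 0" using nz degree_mult_eq[of b c] by simp
    then have deg: "degree b = 0" "degree c = 0" by auto
    have "d = coeff b 0 * coeff c 0" using arg_cong[OF bc(3), of "\<lambda>f. coeff f 0"] by (simp add: coeff_mult_0)
    moreover have "coeff b 0 \<in> D" "coeff c 0 \<in> D" using bc unfolding PR_def by auto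
    ultimately have "unit_in D (coeff b 0) \<or> unit_in D (coeff c 0)" using d unfolding atom_in_def by blast
    then show ?thesis using poly_deg0_unit[OF D] bc deg by blast
  qed
  show ?thesis unfolding atom_in_def using dD nu fac by (auto simp: PR_def)
qed

lemma fps_unit:
  assumes D: "is_subring D" and f: "f \<in> FR D" "unit_in D (fps_nth f 0)"
  shows "unit_in (FR D) f"
proof -
  obtain v where v: "v \<in> D" "fps_nth f 0 * v = 1" using f unfolding unit_in_def by auto
  have nz: "fps_nth f 0 \<noteq> 0" using v by auto
  have "v = inverse (fps_nth f 0)" using v inverse_unique[of "fps_nth f 0" v] by simp
  then have "inverse f \<in> FR D" using v by (simp add: FR_def)
  then show ?thesis using f inverse_mult_eq_1'[OF nz] unfolding unit_in_def by auto
qed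

lemma fps_A:
  assumes D: "is_subring D" and d: "atom_in D d"
  shows "atom_in (FR D) (fps_const d)"
proof -
  interpret cterm D "FR D" "\<lambda>f. fps_nth f 0" fps_const by (rule fps_cterm[OF D])
  have dD: "d \<in> D" "d \<noteq> 0" "\<not> unit_in D d" using d unfolding atom_in_def by auto
  have nu: "\<not> unit_in (FR D) (fps_const d)" using unit_ev dD by fastforce
  have fac: "unit_in (FR D) b \<or> unit_in (FR D) c" if bc: "b \<in> FR D" "c \<in> FR D" "fps_const d = b*c" for b c
  proof -
    have "d = fps_nth b 0 * fps_nth c 0" using arg_cong[OF bc(3), of "\<lambda>f. fps_nth f 0"] by simp
    moreover have "fps_nth b 0 \<in> D" "fps_nth c 0 \<in> D" using bc unfolding FR_def by auto
    ultimately have "unit_in D (fps_nth b 0) \<or> unit_in D (fps_nth c 0)" using d unfolding atom_in_def by blast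
    then show ?thesis using fps_unit[OF D] bc by blast
  qed
  show ?thesis unfolding atom_in_def using dD nu fac by (auto simp: FR_def)
qed

lemma fps_field_atomic:
  assumes D: "is_subring D" and F: "field_in D"
  shows "atomic_domain (FR D)"
proof -
  have pos: "subdegree b \<noteq> 0" if "b \<in> FR D" "b \<noteq> 0" "\<not> unit_in (FR D) b" for b
  proof
    assume d0: "subdegree b = 0"
    then have "fps_nth b 0 \<noteq> 0" using that by (simp add: subdegree_eq_0_iff)
    then have "unit_in D (fps_nth b 0)" using F that unfolding field_in_def FR_def by auto
    then show False using fps_unit[OF D that(1)] that by auto
  qed
  show ?thesis unfolding atomic_domain_def
  proof (intro ballI impI)
    fix x assume x: "x \<in> FR D" "x \<noteq> 0 \<and> \<not> unit_in (FR D) x"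
    show "atomic_elem_in (FR D) x"
    proof (rule atomic_by_measure[where P = "\<lambda>x. True" and nu = subdegree])
      fix x assume x: "x \<in> FR D" "x \<noteq> 0" "\<not> unit_in (FR D) x" "\<not> atom_in (FR D) x"
      then obtain b c where bc: "b \<in> FR D" "c \<in> FR D" "x = b*c" "\<not> unit_in (FR D) b" "\<not> unit_in (FR D) c"
        unfolding atom_in_def by blast
      have bcnz: "b \<noteq> 0" "c \<noteq> 0" using bc x by auto
      have "subdegree b \<noteq> 0" "subdegree c \<noteq> 0" using pos bc bcnz by auto
      moreover have "subdegree x = subdegree b + subdegree c" using bc bcnz by simp
      ultimately show "\<exists>g h. x = g*h \<and> g\<in>FR D \<and> h\<in>FR D \<and> True \<and> True \<and> g \<noteq> 0 \<and> h \<noteq> 0 \<and>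
         \<not> unit_in (FR D) g \<and> \<not> unit_in (FR D) h \<and> subdegree g < subdegree x \<and> subdegree h < subdegree x"
        using bc bcnz by (intro exI[of _ b] exI[of _ c]) auto
    qed (use x in auto)
  qed
qed

lemma fps_H:
  assumes D: "is_subring D"
  shows "x \<in> FR D \<Longrightarrow> unit_in D (fps_nth x 0) \<Longrightarrow> \<not> unit_in (FR D) x \<Longrightarrow> atomic_elem_in (FR D) x"
proof -
  assume a: "x \<in> FR D" and b: "unit_in D (fps_nth x 0)" and c: "\<not> unit_in (FR D) x"
  have "unit_in (FR D) x" by (rule fps_unit[OF D a b])
  with c show ?thesis by simp
qed

theorem corollary3p2:
  fixes D :: "'l::field set"
  defines "R \<equiv> {p :: 'l poly. coeff p 0 \<in> D}"
      and "R' \<equiv> {f :: 'l fps. fps_nth f 0 \<in> D}"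
  assumes "is_subring D"
  shows "(field_in D \<longrightarrow> completely_atomic_domain R \<and> completely_atomic_domain R') \<and>
         (\<not> field_in D \<and> atomic_domain D \<longrightarrow> completely_atomic_domain R \<and> completely_atomic_domain R')"
proof -
  have RR: "R = PR D" "R' = FR D" unfolding R_def R'_def PR_def FR_def by auto
  interpret P: cterm D "PR D" "\<lambda>p. coeff p 0" "\<lambda>d. [:d:]" by (rule poly_cterm[OF assms(3)])
  interpret F: cterm D "FR D" "\<lambda>f. fps_nth f 0" fps_const by (rule fps_cterm[OF assms(3)])
  have c1: "completely_atomic_domain R \<and> completely_atomic_domain R'" if FF: "field_in D"
  proof -
    have "completely_atomic (PR D)" by (rule field_case_ca[OF poly_field_atomic[OF assms(3) FF]])
    moreover have "completely_atomic (FR D)" by (rule field_case_ca[OF fps_field_atomic[OF assms(3) FF]])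
    ultimately show ?thesis unfolding RR completely_atomic_domain_def using P.subring F.subring by simp
  qed
  have c2: "completely_atomic_domain R \<and> completely_atomic_domain R'"
    if NF: "\<not> field_in D" and AD: "atomic_domain D"
  proof -
    have "completely_atomic (PR D)"
      by (rule P.nonfield_ca[OF NF poly_H[OF assms(3)] poly_A[OF assms(3)] AD])
    moreover have "completely_atomic (FR D)"
      by (rule F.nonfield_ca[OF NF fps_H[OF assms(3)] fps_A[OF assms(3)] AD])
    ultimately show ?thesis unfolding RR completely_atomic_domain_def using P.subring F.subring by simp
  qed
  show ?thesis using c1 c2 by simp
qed

end
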